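(* Let $n\ge2$, $m\ge1$, $q=2^m$, and let $\mathbf{H}_X^{(q)}$, $\mathbf{H}_Z^{(q)}$ be $q$-ary labelings of the toric Tanner graphs $\mathcal{G}_X$, $\mathcal{G}_Z$ (as in the context) with codes $\mathcal{C}_X^{(q)}$, $\mathcal{C}_Z^{(q)}$, such that every cycle of the labeled graph $\mathcal{G}_X$ has product $1$ and $(\mathcal{C}_Z^{(q)})^\perp\subset\mathcal{C}_X^{(q)}$. Then the minimum distance of the extended toric code $(\hat{\mathcal{C}}_X,\hat{\mathcal{C}}_Z)$, namely $\min\{\min\{|x|:x\in\hat{\mathcal{C}}_X\setminus\hat{\mathcal{C}}_Z^\perp\},\ \min\{|x|:x\in\hat{\mathcal{C}}_Z\setminus\hat{\mathcal{C}}_X^\perp\}\}$ (Hamming weights), is at least $n$.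
   Context: Indices are taken in $\mathbb{Z}_{2n}=\{0,\dots,2n-1\}$ with arithmetic mod $2n$. Variable nodes: $V=\{(i,j)\in\mathbb{Z}_{2n}^2: i+j\text{ even}\}$ ($2n^2$ nodes). $X$-checks: $C_X=\{(i,j): i\text{ odd}, j\text{ even}\}$; $Z$-checks: $C_Z=\{(i,j): i\text{ even}, j\text{ odd}\}$. Each check $(i,j)$ is adjacent to the variable nodes $(i\pm1,j)$, $(i,j\pm1)$; $\mathcal{G}_X$, $\mathcal{G}_Z$ are the bipartite graphs on $V\cup C_X$, $V\cup C_Z$. A $q$-ary labeling is $\mathbf{H}_X^{(q)}=(x_{c,v})\in\mathbb{F}_q^{C_X\times V}$ with $x_{c,v}\ne0$ iff $c,v$ adjacent, similarly $\mathbf{H}_Z^{(q)}\in\mathbb{F}_q^{C_Z\times V}$; $\mathcal{C}_X^{(q)}=\ker\mathbf{H}_X^{(q)}$, $\mathcal{C}_Z^{(q)}=\ker\mathbf{H}_Z^{(q)}$, $\perp$ w.r.t. the standard bilinear form. For a cycle $v_1,c_1,\dots,v_k,c_k,v_1$ of labeled $\mathcal{G}_X$ its product is $\prod_t x_{c_t v_{t+1}}x_{c_t v_t}^{-1}$. Extended toric code: fix an $\mathbb{F}_2$-basis of $\mathbb{F}_{2^m}$ and let $A:\mathbb{F}_{2^m}\to\mathbb{F}_2^{m\times m}$ send $a$ to the matrix of multiplication by $a$ in that basis. $\hat{\mathbf{H}}_X$ is obtained from $\mathbf{H}_X^{(q)}$ by replacing each entry $h$ by the block $A(h)$, and $\hat{\mathbf{H}}_Z$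 from $\mathbf{H}_Z^{(q)}$ by replacing each entry $h$ by $A(h)^T$ (zero entries become zero blocks); then $\hat{\mathbf{H}}_X\hat{\mathbf{H}}_Z^T=0$. $\hat{\mathcal{C}}_X=\ker\hat{\mathbf{H}}_X$, $\hat{\mathcal{C}}_Z=\ker\hat{\mathbf{H}}_Z\subset\mathbb{F}_2^{2mn^2}$, with $\perp$ the standard binary dual. *)

theory Defs
  imports Main "HOL-Library.Z2"
begin

definition tor_V :: "nat \<Rightarrow> (nat \<times> nat) set" where
  "tor_V n = {(i,j). i < 2*n \<and> j < 2*n \<and> even (i+j)}"

definition tor_CX :: "nat \<Rightarrow> (nat \<times> nat) set" where
  "tor_CX n = {(i,j). i < 2*n \<and> j < 2*n \<and> odd i \<and> even j}"

definition tor_CZ :: "nat \<Rightarrow> (nat \<times> nat) set" where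
  "tor_CZ n = {(i,j). i < 2*n \<and> j < 2*n \<and> even i \<and> odd j}"

definition tor_adj :: "nat \<Rightarrow> nat \<times> nat \<Rightarrow> nat \<times> nat \<Rightarrow> bool" where
  "tor_adj n c v \<longleftrightarrow>
     v \<in> {((fst c + 1) mod (2*n), snd c), ((fst c + 2*n - 1) mod (2*n), snd c),
          (fst c, (snd c + 1) mod (2*n)), (fst c, (snd c + 2*n - 1) mod (2*n))}"

definition labeling :: "nat \<Rightarrow> (nat \<times> nat) set \<Rightarrow> (nat \<times> nat \<Rightarrow> nat \<times> nat \<Rightarrow> 'a::field) \<Rightarrow> bool" where
  "labeling n C H \<longleftrightarrow> (\<forall>c\<in>C. \<forall>v\<in>tor_V n. H c v \<noteq> 0 \<longleftrightarrow> tor_adj n c v)"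

definition qcode :: "nat \<Rightarrow> (nat \<times> nat) set \<Rightarrow> (nat \<times> nat \<Rightarrow> nat \<times> nat \<Rightarrow> 'a::field)
     \<Rightarrow> (nat \<times> nat \<Rightarrow> 'a) set" where
  "qcode n C H = {x. (\<forall>v. v \<notin> tor_V n \<longrightarrow> x v = 0) \<and>
                      (\<forall>c\<in>C. (\<Sum>v\<in>tor_V n. H c v * x v) = 0)}"

definition qdual :: "nat \<Rightarrow> (nat \<times> nat \<Rightarrow> 'a::field) set \<Rightarrow> (nat \<times> nat \<Rightarrow> 'a) set" where
  "qdual n S = {y. (\<forall>v. v \<notin> tor_V n \<longrightarrow> y v = 0) \<and>
                   (\<forall>x\<in>S. (\<Sum>v\<in>tor_V n. x v * y v) = 0)}"

definition is_cycle :: "nat \<Rightarrow> (nat \<times> nat) set \<Rightarrow> nat \<Rightarrow> (nat \<Rightarrow> nat \<times> nat) \<Rightarrow> (nat \<Rightarrow> nat \<times> nat) \<Rightarrow> bool" where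
  "is_cycle n C k vs cs \<longleftrightarrow> 2 \<le> k \<and> inj_on vs {..<k} \<and> inj_on cs {..<k} \<and>
     (\<forall>t<k. vs t \<in> tor_V n \<and> cs t \<in> C \<and> tor_adj n (cs t) (vs t) \<and>
            tor_adj n (cs t) (vs ((t+1) mod k)))"

definition cycle_prod :: "(nat \<times> nat \<Rightarrow> nat \<times> nat \<Rightarrow> 'a::field) \<Rightarrow> nat \<Rightarrow> (nat \<Rightarrow> nat \<times> nat) \<Rightarrow> (nat \<Rightarrow> nat \<times> nat) \<Rightarrow> 'a" where
  "cycle_prod H k vs cs = (\<Prod>t<k. H (cs t) (vs ((t+1) mod k)) * inverse (H (cs t) (vs t)))"

definition emb :: "bit \<Rightarrow> 'a::field" where
  "emb c = (if c = 1 then 1 else 0)"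

definition F2_basis :: "nat \<Rightarrow> (nat \<Rightarrow> 'a::field) \<Rightarrow> bool" where
  "F2_basis m b \<longleftrightarrow> (\<forall>a. \<exists>!c::nat \<Rightarrow> bit. (\<forall>k. m \<le> k \<longrightarrow> c k = 0) \<and> a = (\<Sum>k<m. emb (c k) * b k))"

definition coord :: "nat \<Rightarrow> (nat \<Rightarrow> 'a::field) \<Rightarrow> 'a \<Rightarrow> nat \<Rightarrow> bit" where
  "coord m b a = (THE c. (\<forall>k. m \<le> k \<longrightarrow> c k = 0) \<and> a = (\<Sum>k<m. emb (c k) * b k))"

text \<open>A(h): matrix of multiplication by h; entry (k,l) is the k-th coordinate of h * b l\<close>
definition mulmat :: "nat \<Rightarrow> (nat \<Rightarrow> 'a::field) \<Rightarrow> 'a \<Rightarrow> nat \<Rightarrow> nat \<Rightarrow> bit" where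
  "mulmat m b h k l = coord m b (h * b l) k"

definition bsupp :: "nat \<Rightarrow> nat \<Rightarrow> ((nat \<times> nat) \<times> nat) set" where
  "bsupp n m = tor_V n \<times> {..<m}"

text \<open>ker of hat H_X (blocks A(h)) and of hat H_Z (blocks A(h)^T)\<close>
definition bcodeX :: "nat \<Rightarrow> nat \<Rightarrow> (nat \<Rightarrow> 'a::field) \<Rightarrow> (nat \<times> nat \<Rightarrow> nat \<times> nat \<Rightarrow> 'a)
     \<Rightarrow> ((nat \<times> nat) \<times> nat \<Rightarrow> bit) set" where
  "bcodeX n m b H = {y. (\<forall>p. p \<notin> bsupp n m \<longrightarrow> y p = 0) \<and>
      (\<forall>c\<in>tor_CX n. \<forall>k<m. (\<Sum>(v,l)\<in>bsupp n m. mulmat m b (H c v) k l * y (v,l)) = 0)}"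

definition bcodeZ :: "nat \<Rightarrow> nat \<Rightarrow> (nat \<Rightarrow> 'a::field) \<Rightarrow> (nat \<times> nat \<Rightarrow> nat \<times> nat \<Rightarrow> 'a)
     \<Rightarrow> ((nat \<times> nat) \<times> nat \<Rightarrow> bit) set" where
  "bcodeZ n m b H = {y. (\<forall>p. p \<notin> bsupp n m \<longrightarrow> y p = 0) \<and>
      (\<forall>c\<in>tor_CZ n. \<forall>k<m. (\<Sum>(v,l)\<in>bsupp n m. mulmat m b (H c v) l k * y (v,l)) = 0)}"

definition bdual :: "nat \<Rightarrow> nat \<Rightarrow> ((nat \<times> nat) \<times> nat \<Rightarrow> bit) set \<Rightarrow> ((nat \<times> nat) \<times> nat \<Rightarrow> bit) set" where
  "bdual n m S = {y. (\<forall>p. p \<notin> bsupp n m \<longrightarrow> y p = 0) \<and>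
                     (\<forall>x\<in>S. (\<Sum>p\<in>bsupp n m. x p * y p) = 0)}"

definition hweight :: "nat \<Rightarrow> nat \<Rightarrow> ((nat \<times> nat) \<times> nat \<Rightarrow> bit) \<Rightarrow> nat" where
  "hweight n m y = card {p \<in> bsupp n m. y p \<noteq> 0}"

end

theory Submission
  imports Defs
begin


lemma card_of_nat_zero:
  "(of_nat (card (UNIV::'a::{comm_ring_1,finite} set)) :: 'a) = 0"
proof -
  have bij: "bij (\<lambda>x::'a. x+1)"
    by (rule bij_betw_byWitness[where f'="\<lambda>x. x - 1"]) auto
  have "(\<Sum>x\<in>UNIV. x + 1) = (\<Sum>x\<in>UNIV. (x::'a))"
    using sum.reindex_bij_betw[OF bij, of "\<lambda>x. x"] by simp
  then show ?thesis by (simp add: sum.distrib)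
qed

lemma char2:
  assumes "card (UNIV :: 'a::{field,finite} set) = 2 ^ m"
  shows "(1::'a) + 1 = 0"
proof -
  have "(of_nat (2^m) :: 'a) = 0" using card_of_nat_zero[where 'a='a] assms by simp
  then have "(2::'a)^m = 0" by simp
  then have "(2::'a) = 0" by simp
  then show ?thesis by simp
qed




lemma sum_single:
  assumes "finite A" "a \<in> A" "\<forall>x\<in>A. x \<noteq> a \<longrightarrow> f x = 0"
  shows "sum f A = f a"
proof -
  have "sum f A = f a + sum f (A - {a})" using assms by (simp add: sum.remove)
  also have "sum f (A - {a}) = 0" using assms by (intro sum.neutral) auto
  finally show ?thesis by simp
qed

context
  fixes n :: nat and V :: "'v set" and HP HQ :: "'c \<Rightarrow> 'v \<Rightarrow> 'a::field"
    and vx fc :: "nat \<Rightarrow> nat \<Rightarrow> 'c" and he ve :: "nat \<Rightarrow> nat \<Rightarrow> 'v"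
  assumes n2: "2 \<le> n" and finV: "finite V"
  and heV: "\<And>r s. r<n \<Longrightarrow> s<n \<Longrightarrow> he r s \<in> V"
  and veV: "\<And>r s. r<n \<Longrightarrow> s<n \<Longrightarrow> ve r s \<in> V"
  and he_inj: "\<And>r s r' s'. r<n \<Longrightarrow> s<n \<Longrightarrow> r'<n \<Longrightarrow> s'<n \<Longrightarrow> he r s = he r' s' \<Longrightarrow> r = r' \<and> s = s'"
  and ve_inj: "\<And>r s r' s'. r<n \<Longrightarrow> s<n \<Longrightarrow> r'<n \<Longrightarrow> s'<n \<Longrightarrow> ve r s = ve r' s' \<Longrightarrow> r = r' \<and> s = s'"
  and he_ve: "\<And>r s r' s'. r<n \<Longrightarrow> s<n \<Longrightarrow> r'<n \<Longrightarrow> s'<n \<Longrightarrow> he r s \<noteq> ve r' s'"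
  and vx_adj: "\<And>r s v. r<n \<Longrightarrow> s<n \<Longrightarrow> v\<in>V \<Longrightarrow> HP (vx r s) v \<noteq> 0 \<Longrightarrow>
      v = he r s \<or> v = he r (if s = 0 then n-1 else s-1) \<or> v = ve r s \<or> v = ve (if r = 0 then n-1 else r-1) s"
  and vx_nz_h: "\<And>r s. r<n \<Longrightarrow> 0<s \<Longrightarrow> s<n \<Longrightarrow> HP (vx r s) (he r (s-1)) \<noteq> 0"
  and vx_nz_v: "\<And>r s. 0<r \<Longrightarrow> r<n \<Longrightarrow> s<n \<Longrightarrow> HP (vx r s) (ve (r-1) s) \<noteq> 0"
  and fc_adj: "\<And>r s v. r+1<n \<Longrightarrow> s+1<n \<Longrightarrow> v\<in>V \<Longrightarrow> HQ (fc r s) v \<noteq> 0 \<Longrightarrow>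
      v = he r s \<or> v = he (r+1) s \<or> v = ve r s \<or> v = ve r (s+1)"
  and fc_nz: "\<And>r s. r+1<n \<Longrightarrow> s+1<n \<Longrightarrow> HQ (fc r s) (ve r (s+1)) \<noteq> 0"
  and orth: "\<And>r s r' s'. r<n \<Longrightarrow> s<n \<Longrightarrow> r'+1<n \<Longrightarrow> s'+1<n \<Longrightarrow>
      (\<Sum>v\<in>V. HP (vx r s) v * HQ (fc r' s') v) = 0"
begin

definition flow :: "('v \<Rightarrow> 'a) \<Rightarrow> bool" where
  "flow X \<longleftrightarrow> (\<forall>r<n. \<forall>s<n. (\<Sum>v\<in>V. HP (vx r s) v * X v) = 0)"

definition spanQ :: "('v \<Rightarrow> 'a) \<Rightarrow> bool" where
  "spanQ X \<longleftrightarrow> (\<exists>a. \<forall>v\<in>V. X v = (\<Sum>p\<in>{..<n}\<times>{..<n}. a p * HQ (fc (fst p) (snd p)) v))"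

definition Gs :: "nat \<Rightarrow> ('v \<Rightarrow> 'a) \<Rightarrow> bool" where
  "Gs s X \<longleftrightarrow> (\<forall>v\<in>V. X v \<noteq> 0 \<longrightarrow>
     (\<exists>r t. r<n \<and> t+1<n \<and> v = he r t) \<or> (\<exists>r t. r+1<n \<and> t \<le> s \<and> v = ve r t))"

lemma spanQ_zero: "spanQ (\<lambda>v. 0)"
  unfolding spanQ_def by (rule exI[of _ "\<lambda>p. 0"]) simp

lemma spanQ_add: "spanQ X \<Longrightarrow> spanQ Y \<Longrightarrow> spanQ (\<lambda>v. X v + Y v)"
  unfolding spanQ_def
proof (elim exE)
  fix a a' assume a: "\<forall>v\<in>V. X v = (\<Sum>p\<in>{..<n}\<times>{..<n}. a p * HQ (fc (fst p) (snd p)) v)"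
    and a': "\<forall>v\<in>V. Y v = (\<Sum>p\<in>{..<n}\<times>{..<n}. a' p * HQ (fc (fst p) (snd p)) v)"
  show "\<exists>a. \<forall>v\<in>V. X v + Y v = (\<Sum>p\<in>{..<n}\<times>{..<n}. a p * HQ (fc (fst p) (snd p)) v)"
    by (rule exI[of _ "\<lambda>p. a p + a' p"]) (simp add: a a' distrib_right sum.distrib)
qed

lemma spanQ_sum: "finite R \<Longrightarrow> (\<forall>r\<in>R. spanQ (g r)) \<Longrightarrow> spanQ (\<lambda>v. \<Sum>r\<in>R. g r v)"
proof (induction R rule: finite_induct)
  case empty then show ?case by (simp add: spanQ_zero)
next
  case (insert x F)
  then show ?case using spanQ_add[of "g x" "\<lambda>v. \<Sum>r\<in>F. g r v"] by simp
qed

lemma spanQ_face: "r<n \<Longrightarrow> s<n \<Longrightarrow> spanQ (\<lambda>v. c * HQ (fc r s) v)"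
  unfolding spanQ_def
proof (rule exI[of _ "\<lambda>p. if p = (r,s) then c else 0"], intro ballI)
  fix v assume "r<n" "s<n"
  have "(\<Sum>p\<in>{..<n}\<times>{..<n}. (if p = (r,s) then c else 0) * HQ (fc (fst p) (snd p)) v)
      = (\<Sum>p\<in>{..<n}\<times>{..<n}. if p = (r,s) then c * HQ (fc (fst p) (snd p)) v else 0)"
    by (rule sum.cong) auto
  also have "\<dots> = c * HQ (fc r s) v" using \<open>r<n\<close> \<open>s<n\<close> by (simp add: sum.delta')
  finally show "c * HQ (fc r s) v = (\<Sum>p\<in>{..<n}\<times>{..<n}. (if p = (r,s) then c else 0) * HQ (fc (fst p) (snd p)) v)"
    by simp
qed

lemma leaf:
  assumes fl: "flow X" and r: "r<n" and s: "s<n" and eV: "e \<in> V" and nz: "HP (vx r s) e \<noteq> 0"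
    and oth: "\<And>v. v \<in> V \<Longrightarrow> v \<noteq> e \<Longrightarrow> HP (vx r s) v \<noteq> 0 \<Longrightarrow> X v = 0"
  shows "X e = 0"
proof -
  have "(\<Sum>v\<in>V. HP (vx r s) v * X v) = HP (vx r s) e * X e"
    by (rule sum_single[OF finV eV]) (use oth in auto)
  moreover have "(\<Sum>v\<in>V. HP (vx r s) v * X v) = 0" using fl r s unfolding flow_def by blast
  ultimately show ?thesis using nz by simp
qed

lemma base:
  assumes fl: "flow X" and G: "Gs 0 X"
  shows "\<forall>v\<in>V. X v = 0"
proof -
  have H: "\<forall>r<n. X (he r (n-1-t)) = 0" if "t<n" for t
    using that
  proof (induction t)
    case 0
    show ?case
    proof (intro allI impI)
      fix r assume r: "r<n"
      show "X (he r (n-1-0)) = 0"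
      proof (rule ccontr)
        assume "X (he r (n-1-0)) \<noteq> 0"
        with G heV r n2 have "(\<exists>r' t. r'<n \<and> t+1<n \<and> he r (n-1) = he r' t) \<or> (\<exists>r' t. r'+1<n \<and> t \<le> 0 \<and> he r (n-1) = ve r' t)"
          unfolding Gs_def by simp
        then show False
        proof (elim disjE exE conjE)
          fix r' t assume "r'<n" "t+1<n" "he r (n-1) = he r' t"
          then show False using he_inj[of r "n-1" r' t] r n2 by auto
        next
          fix r' t assume "r'+1<n" "t \<le> 0" "he r (n-1) = ve r' t"
          then show False using he_ve[of r "n-1" r' t] r n2 by simp
        qed
      qed
    qed
  next
    case (Suc t)
    show ?case
    proof (intro allI impI)
      fix r assume r: "r<n"
      define s' where "s' = n-1-t"
      have s'1: "0 < s'" "s' < n" using Suc.prems unfolding s'_def by auto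
      have e: "n - 1 - Suc t = s' - 1" unfolding s'_def by simp
      show "X (he r (n - 1 - Suc t)) = 0" unfolding e
      proof (rule leaf[OF fl r \<open>s'<n\<close>])
        show "he r (s' - 1) \<in> V" using heV r s'1 by simp
        show "HP (vx r s') (he r (s' - 1)) \<noteq> 0" using vx_nz_h r s'1 by simp
        fix v assume v: "v \<in> V" "v \<noteq> he r (s' - 1)" "HP (vx r s') v \<noteq> 0"
        then have "v = he r s' \<or> v = ve r s' \<or> v = ve (if r = 0 then n-1 else r-1) s'"
          using vx_adj[OF r \<open>s'<n\<close> v(1) v(3)] s'1 by auto
        moreover have "X (he r s') = 0" using Suc.IH Suc.prems r unfolding s'_def by simp
        moreover have "X (ve r' s') = 0" if "r' < n" for r'
        proof (rule ccontr)
          assume "X (ve r' s') \<noteq> 0"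
          with G veV that s'1 have "(\<exists>r'' t. r''<n \<and> t+1<n \<and> ve r' s' = he r'' t) \<or> (\<exists>r'' t. r''+1<n \<and> t \<le> 0 \<and> ve r' s' = ve r'' t)"
            unfolding Gs_def by simp
          then show False
          proof (elim disjE exE conjE)
            fix r'' t assume "r''<n" "t+1<n" "ve r' s' = he r'' t"
            then show False using he_ve[of r'' t r' s'] that s'1 by simp
          next
            fix r'' t assume "r''+1<n" "t \<le> 0" "ve r' s' = ve r'' t"
            then show False using ve_inj[of r' s' r'' t] that s'1 by simp
          qed
        qed
        ultimately show "X v = 0" using r by auto
      qed
    qed
  qed
  have W: "X (ve (n-1-t) 0) = 0" if "t<n" for t
    using that
  proof (induction t)
    case 0
    show ?case
    proof (rule ccontr)
      assume "X (ve (n-1-0) 0) \<noteq> 0"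
      with G veV n2 have "(\<exists>r' t. r'<n \<and> t+1<n \<and> ve (n-1) 0 = he r' t) \<or> (\<exists>r' t. r'+1<n \<and> t \<le> 0 \<and> ve (n-1) 0 = ve r' t)"
        unfolding Gs_def by simp
      then show False
      proof (elim disjE exE conjE)
        fix r' t assume "r'<n" "t+1<n" "ve (n-1) 0 = he r' t"
        then show False using he_ve[of r' t "n-1" 0] n2 by simp
      next
        fix r' t assume "r'+1<n" "t \<le> 0" "ve (n-1) 0 = ve r' t"
        then show False using ve_inj[of "n-1" 0 r' t] n2 by simp
      qed
    qed
  next
    case (Suc t)
    define r' where "r' = n-1-t"
    have r'1: "0 < r'" "r' < n" using Suc.prems unfolding r'_def by auto
    have e: "n - 1 - Suc t = r' - 1" unfolding r'_def by simp
    have n0: "0 < n" using n2 by simp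
    show ?case unfolding e
    proof (rule leaf[OF fl \<open>r'<n\<close> n0])
      show "ve (r' - 1) 0 \<in> V" using veV r'1 by simp
      show "HP (vx r' 0) (ve (r' - 1) 0) \<noteq> 0" using vx_nz_v r'1 n0 by simp
      fix v assume v: "v \<in> V" "v \<noteq> ve (r' - 1) 0" "HP (vx r' 0) v \<noteq> 0"
      then have "v = he r' 0 \<or> v = he r' (n-1) \<or> v = ve r' 0"
        using vx_adj[OF \<open>r'<n\<close> n0 v(1) v(3)] r'1 by auto
      moreover have "X (he r' 0) = 0" using H[of "n-1"] r'1 n0 by simp
      moreover have "X (he r' (n-1)) = 0" using H[of 0] r'1 n0 by simp
      moreover have "X (ve r' 0) = 0" using Suc.IH Suc.prems unfolding r'_def by simp
      ultimately show "X v = 0" by auto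
    qed
  qed
  show ?thesis
  proof (intro ballI)
    fix v assume v: "v \<in> V"
    show "X v = 0"
    proof (rule ccontr)
      assume nz: "X v \<noteq> 0"
      with G v have "(\<exists>r t. r<n \<and> t+1<n \<and> v = he r t) \<or> (\<exists>r t. r+1<n \<and> t \<le> 0 \<and> v = ve r t)"
        unfolding Gs_def by blast
      then show False
      proof
        assume "\<exists>r t. r<n \<and> t+1<n \<and> v = he r t"
        then obtain r t where rt: "r<n" "t+1<n" "v = he r t" by blast
        have "n - 1 - (n - 1 - t) = t" using rt by simp
        then show False using H[of "n-1-t"] rt nz by auto
      next
        assume "\<exists>r t. r+1<n \<and> t \<le> 0 \<and> v = ve r t"
        then obtain r where rt: "r+1<n" "v = ve r 0" by auto
        have "n - 1 - (n - 1 - r) = r" using rt by simp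
        then show False using W[of "n-1-r"] rt nz by auto
      qed
    qed
  qed
qed

lemma step:
  assumes s1: "Suc s < n" and fl: "flow X" and G: "Gs (Suc s) X"
    and IH: "\<And>Y. flow Y \<Longrightarrow> Gs s Y \<Longrightarrow> spanQ Y"
  shows "spanQ X"
proof -
  define a where "a r = (if r+1<n then X (ve r (Suc s)) / HQ (fc r s) (ve r (Suc s)) else 0)" for r
  define Z where "Z v = (\<Sum>r<n. a r * HQ (fc r s) v)" for v
  define Y where "Y v = X v - Z v" for v
  have flY: "flow Y" unfolding flow_def
  proof (intro allI impI)
    fix r' s' assume r's': "r'<n" "s'<n"
    have "(\<Sum>v\<in>V. HP (vx r' s') v * Y v) = (\<Sum>v\<in>V. HP (vx r' s') v * X v) - (\<Sum>v\<in>V. HP (vx r' s') v * Z v)"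
      unfolding Y_def by (simp add: right_diff_distrib sum_subtractf)
    also have "(\<Sum>v\<in>V. HP (vx r' s') v * X v) = 0" using fl r's' unfolding flow_def by blast
    also have "(\<Sum>v\<in>V. HP (vx r' s') v * Z v) = (\<Sum>v\<in>V. \<Sum>r<n. a r * (HP (vx r' s') v * HQ (fc r s) v))"
      unfolding Z_def by (simp add: sum_distrib_left mult.left_commute)
    also have "\<dots> = (\<Sum>r<n. \<Sum>v\<in>V. a r * (HP (vx r' s') v * HQ (fc r s) v))"
      by (rule sum.swap)
    also have "\<dots> = (\<Sum>r<n. a r * (\<Sum>v\<in>V. HP (vx r' s') v * HQ (fc r s) v))"
      by (simp add: sum_distrib_left)
    also have "\<dots> = 0"
    proof (rule sum.neutral, intro ballI)
      fix r assume "r \<in> {..<n}"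
      show "a r * (\<Sum>v\<in>V. HP (vx r' s') v * HQ (fc r s) v) = 0"
      proof (cases "r+1<n")
        case True then show ?thesis using orth[of r' s' r s] r's' s1 by simp
      next
        case False then show ?thesis unfolding a_def by simp
      qed
    qed
    finally show "(\<Sum>v\<in>V. HP (vx r' s') v * Y v) = 0" by simp
  qed
  have K: "Y (ve r (Suc s)) = 0" if r: "r+1<n" for r
  proof -
    have "Z (ve r (Suc s)) = a r * HQ (fc r s) (ve r (Suc s))"
      unfolding Z_def
    proof (rule sum_single)
      show "finite {..<n}" by simp
      show "r \<in> {..<n}" using r by simp
      show "\<forall>x\<in>{..<n}. x \<noteq> r \<longrightarrow> a x * HQ (fc x s) (ve r (Suc s)) = 0"
      proof (intro ballI impI)
        fix x assume x: "x \<in> {..<n}" "x \<noteq> r"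
        show "a x * HQ (fc x s) (ve r (Suc s)) = 0"
        proof (cases "x+1<n")
          case False then show ?thesis unfolding a_def by simp
        next
          case True
          show ?thesis
          proof (rule ccontr)
            assume "a x * HQ (fc x s) (ve r (Suc s)) \<noteq> 0"
            then have "HQ (fc x s) (ve r (Suc s)) \<noteq> 0" by auto
            then have "ve r (Suc s) = he x s \<or> ve r (Suc s) = he (x+1) s \<or> ve r (Suc s) = ve x s \<or> ve r (Suc s) = ve x (s+1)"
              using fc_adj[OF True _ veV] s1 r by simp
            then show False
            proof (elim disjE)
              assume "ve r (Suc s) = he x s" then show False using he_ve[of x s r "Suc s"] s1 r True by simp
            next
              assume "ve r (Suc s) = he (x+1) s" then show False using he_ve[of "x+1" s r "Suc s"] s1 r True by simp
            next
              assume "ve r (Suc s) = ve x s" then show False using ve_inj[of r "Suc s" x s] s1 r True by simp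
            next
              assume "ve r (Suc s) = ve x (s+1)" then show False using ve_inj[of r "Suc s" x "s+1"] s1 r True x by simp
            qed
          qed
        qed
      qed
    qed
    also have "\<dots> = X (ve r (Suc s))" unfolding a_def using r fc_nz[of r s] s1 by simp
    finally show ?thesis unfolding Y_def by simp
  qed
  have GY: "Gs s Y" unfolding Gs_def
  proof (intro ballI impI)
    fix v assume v: "v \<in> V" "Y v \<noteq> 0"
    show "(\<exists>r t. r<n \<and> t+1<n \<and> v = he r t) \<or> (\<exists>r t. r+1<n \<and> t \<le> s \<and> v = ve r t)"
    proof (cases "X v = 0")
      case False
      with G v have "(\<exists>r t. r<n \<and> t+1<n \<and> v = he r t) \<or> (\<exists>r t. r+1<n \<and> t \<le> Suc s \<and> v = ve r t)"
        unfolding Gs_def by blast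
      then show ?thesis
      proof (elim disjE exE conjE)
        fix r t assume "r<n" "t+1<n" "v = he r t" then show ?thesis by blast
      next
        fix r t assume rt: "r+1<n" "t \<le> Suc s" "v = ve r t"
        show ?thesis
        proof (cases "t = Suc s")
          case True then show ?thesis using K[OF rt(1)] rt v by simp
        next
          case False then show ?thesis using rt by (intro disjI2) (rule exI[of _ r], rule exI[of _ t], simp)
        qed
      qed
    next
      case True
      then have "Z v \<noteq> 0" using v unfolding Y_def by simp
      then obtain r where r: "r \<in> {..<n}" "a r * HQ (fc r s) v \<noteq> 0"
        unfolding Z_def by (meson sum.not_neutral_contains_not_neutral)
      then have r1: "r+1<n" unfolding a_def by (cases "r+1<n") auto
      have "HQ (fc r s) v \<noteq> 0" using r by auto
      then have "v = he r s \<or> v = he (r+1) s \<or> v = ve r s \<or> v = ve r (s+1)"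
        using fc_adj[OF r1 _ v(1)] s1 by simp
      then show ?thesis
      proof (elim disjE)
        assume "v = he r s" then show ?thesis using r1 s1 by (intro disjI1) (rule exI[of _ r], rule exI[of _ s], simp)
      next
        assume "v = he (r+1) s" then show ?thesis using r1 s1 by (intro disjI1) (rule exI[of _ "r+1"], rule exI[of _ s], simp)
      next
        assume "v = ve r s" then show ?thesis using r1 by (intro disjI2) (rule exI[of _ r], rule exI[of _ s], simp)
      next
        assume "v = ve r (s+1)" then show ?thesis using K[OF r1] v by simp
      qed
    qed
  qed
  have sY: "spanQ Y" using IH[OF flY GY] .
  have sZ: "spanQ Z" unfolding Z_def
    by (rule spanQ_sum) (use spanQ_face s1 in auto)
  have "X = (\<lambda>v. Y v + Z v)" unfolding Y_def by auto
  then show ?thesis using spanQ_add[OF sY sZ] by simp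
qed

lemma all_s: "s < n \<Longrightarrow> flow X \<Longrightarrow> Gs s X \<Longrightarrow> spanQ X"
proof (induction s arbitrary: X)
  case 0
  then have "\<forall>v\<in>V. X v = 0" using base by blast
  then show ?case using spanQ_zero unfolding spanQ_def by simp
next
  case (Suc s)
  show ?case by (rule step[OF Suc.prems]) (use Suc.IH Suc.prems in auto)
qed

lemma grid_main:
  assumes "flow X"
    and "\<forall>v\<in>V. X v \<noteq> 0 \<longrightarrow> (\<exists>r t. r<n \<and> t+1<n \<and> v = he r t) \<or> (\<exists>r t. r+1<n \<and> t<n \<and> v = ve r t)"
  shows "spanQ X"
proof (rule all_s[of "n-1"])
  show "n - 1 < n" using n2 by simp
  show "flow X" by fact
  have eq: "\<And>t::nat. t \<le> n-1 \<longleftrightarrow> t < n" using n2 by auto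
  show "Gs (n-1) X" unfolding Gs_def by (simp only: eq) (rule assms(2))
qed

lemma grid_final:
  assumes "\<forall>r<n. \<forall>s<n. (\<Sum>v\<in>V. HP (vx r s) v * X v) = 0"
    and "\<forall>v\<in>V. X v \<noteq> 0 \<longrightarrow> (\<exists>r t. r<n \<and> t+1<n \<and> v = he r t) \<or> (\<exists>r t. r+1<n \<and> t<n \<and> v = ve r t)"
  shows "\<exists>a. \<forall>v\<in>V. X v = (\<Sum>p\<in>{..<n}\<times>{..<n}. a p * HQ (fc (fst p) (snd p)) v)"
  using grid_main[of X] assms unfolding flow_def spanQ_def by blast

end



lemma even_mod_even: "even (N::nat) \<Longrightarrow> even (x mod N) \<longleftrightarrow> even x"
  by (metis even_add even_mult_iff mult_div_mod_eq)

lemma mod_inj2: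
  fixes x y a N :: nat
  assumes "x < N" "y < N" "(a + x) mod N = (a + y) mod N"
  shows "x = y"
proof -
  have *: "x = y" if "x \<le> y" "x < N" "y < N" "(a + x) mod N = (a + y) mod N" for x y
  proof (rule ccontr)
    assume "x \<noteq> y"
    then have "0 < y - x" "y - x < N" using that by auto
    moreover have "N dvd (a + y) - (a + x)" using that mod_eq_dvd_iff_nat[of "a+x" "a+y" N] by simp
    then have "N dvd y - x" by simp
    ultimately show False using nat_dvd_not_less by blast
  qed
  show ?thesis
  proof (cases "x \<le> y")
    case True then show ?thesis using * assms by blast
  next
    case False then show ?thesis using *[of y x] assms by simp
  qed
qed

lemma solve2:
  fixes n y a :: nat
  assumes "0 < n" "y < 2*n" "a \<le> 4*n" "even (y + a)"
  shows "\<exists>t<n. (a + 2*t) mod (2*n) = y"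
proof -
  define d where "d = (y + 4*n - a) mod (2*n)"
  have "even (y + 4*n - a)" using assms by presburger
  then have ed: "even d" unfolding d_def by (simp add: even_mod_even)
  have dl: "d < 2*n" unfolding d_def using assms by simp
  have "(a + d) mod (2*n) = (a + (y + 4*n - a)) mod (2*n)" unfolding d_def by (simp add: mod_add_right_eq)
  also have "a + (y + 4*n - a) = y + 2 * (2*n)" using assms by simp
  also have "(y + 2 * (2*n)) mod (2*n) = y mod (2*n)" by (rule mod_mult_self1)
  also have "y mod (2*n) = y" using assms by simp
  finally have "(a + d) mod (2*n) = y" .
  moreover have "2 * (d div 2) = d" using ed by simp
  moreover have "d div 2 < n" using dl by simp
  ultimately show ?thesis by (metis)
qed

lemma modm1: "0 < (N::nat) \<Longrightarrow> (x mod N + N - 1) mod N = (x + N - 1) mod N"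
proof -
  assume "0 < N"
  then have "x mod N + N - 1 = x mod N + (N - 1)" "x + N - 1 = x + (N - 1)" by auto
  then show ?thesis by (simp add: mod_add_left_eq)
qed

definition tvx :: "nat \<Rightarrow> nat \<Rightarrow> nat \<Rightarrow> nat \<Rightarrow> nat \<Rightarrow> nat \<times> nat" where
  "tvx n i0 j0 r s = ((i0 + 1 + 2*r) mod (2*n), (j0 + 1 + 2*s) mod (2*n))"
definition thz :: "nat \<Rightarrow> nat \<Rightarrow> nat \<Rightarrow> nat \<Rightarrow> nat \<Rightarrow> nat \<times> nat" where
  "thz n i0 j0 r s = ((i0 + 1 + 2*r) mod (2*n), (j0 + 2 + 2*s) mod (2*n))"
definition tve :: "nat \<Rightarrow> nat \<Rightarrow> nat \<Rightarrow> nat \<Rightarrow> nat \<Rightarrow> nat \<times> nat" where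
  "tve n i0 j0 r s = ((i0 + 2 + 2*r) mod (2*n), (j0 + 1 + 2*s) mod (2*n))"
definition tfc :: "nat \<Rightarrow> nat \<Rightarrow> nat \<Rightarrow> nat \<Rightarrow> nat \<Rightarrow> nat \<times> nat" where
  "tfc n i0 j0 r s = ((i0 + 2 + 2*r) mod (2*n), (j0 + 2 + 2*s) mod (2*n))"

lemma plus1_mod: "((x mod N) + 1) mod N = (x + 1) mod (N::nat)"
  by (rule mod_add_left_eq)

lemma prev_mod:
  fixes a n r :: nat
  assumes "0 < n" "r < n"
  shows "((a + 1 + 2*r) mod (2*n) + 2*n - 1) mod (2*n) = (a + 2 + 2*(if r = 0 then n-1 else r-1)) mod (2*n)"
proof -
  have "((a + 1 + 2*r) mod (2*n) + 2*n - 1) mod (2*n) = (a + 1 + 2*r + 2*n - 1) mod (2*n)"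
    by (rule modm1) (use assms in simp)
  also have "\<dots> = (a + 2 + 2*(if r = 0 then n-1 else r-1)) mod (2*n)"
  proof (cases "r = 0")
    case True
    have "a + 1 + 2*r + 2*n - 1 = a + 2 + 2*(n-1)" using True assms by simp
    then show ?thesis using True by simp
  next
    case False
    have "a + 1 + 2*r + 2*n - 1 = (a + 2 + 2*(r-1)) + 2*n" using False by simp
    then have "(a + 1 + 2*r + 2*n - 1) mod (2*n) = (a + 2 + 2*(r-1)) mod (2*n)"
      by (simp only: mod_add_self2)
    then show ?thesis using False by simp
  qed
  finally show ?thesis .
qed

lemma next_mod: "((a + k + 2*r) mod (2*n) + 1) mod (2*n) = (a + (k+1) + 2*r) mod (2*(n::nat))"
proof -
  have "((a + k + 2*r) mod (2*n) + 1) mod (2*n) = (a + k + 2*r + 1) mod (2*n)" by (rule plus1_mod)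
  also have "a + k + 2*r + 1 = a + (k+1) + 2*r" by simp
  finally show ?thesis .
qed

lemma next1: "((a + 1 + 2*r) mod (2*n) + 1) mod (2*n) = (a + 2 + 2*r) mod (2*(n::nat))"
  using next_mod[of a 1 r n] by simp

lemma next2: "((a + 2 + 2*r) mod (2*n) + 1) mod (2*n) = (a + 1 + 2*(r+1)) mod (2*(n::nat))"
proof -
  have "((a + 2 + 2*r) mod (2*n) + 1) mod (2*n) = (a + 2 + 2*r + 1) mod (2*n)" by (rule plus1_mod)
  also have "a + 2 + 2*r + 1 = a + 1 + 2*(r+1)" by simp
  finally show ?thesis .
qed

lemma prev2:
  fixes a n r :: nat
  assumes "0 < n"
  shows "((a + 2 + 2*r) mod (2*n) + 2*n - 1) mod (2*n) = (a + 1 + 2*r) mod (2*n)"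
proof -
  have "((a + 2 + 2*r) mod (2*n) + 2*n - 1) mod (2*n) = (a + 2 + 2*r + 2*n - 1) mod (2*n)"
    by (rule modm1) (use assms in simp)
  also have "a + 2 + 2*r + 2*n - 1 = (a + 1 + 2*r) + 2*n" by simp
  also have "((a + 1 + 2*r) + 2*n) mod (2*n) = (a + 1 + 2*r) mod (2*n)" by (rule mod_add_self2)
  finally show ?thesis .
qed

lemma vx_nb:
  assumes "0 < n" "r < n" "s < n"
  shows "tor_adj n (tvx n i0 j0 r s) v \<longleftrightarrow>
     v = tve n i0 j0 r s \<or> v = tve n i0 j0 (if r = 0 then n-1 else r-1) s \<or>
     v = thz n i0 j0 r s \<or> v = thz n i0 j0 r (if s = 0 then n-1 else s-1)"
  unfolding tor_adj_def tvx_def fst_conv snd_conv next1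
    prev_mod[OF assms(1,2)] prev_mod[OF assms(1,3)] thz_def tve_def
  by auto

lemma fc_nb:
  assumes "0 < n"
  shows "tor_adj n (tfc n i0 j0 r s) v \<longleftrightarrow>
     v = thz n i0 j0 (r+1) s \<or> v = thz n i0 j0 r s \<or>
     v = tve n i0 j0 r (s+1) \<or> v = tve n i0 j0 r s"
  unfolding tor_adj_def tfc_def fst_conv snd_conv next2 prev2[OF assms] thz_def tve_def
  by auto


lemma finite_torV: "finite (tor_V n)"
  by (rule finite_subset[of _ "{..<2*n} \<times> {..<2*n}"]) (auto simp: tor_V_def)

lemma cover:
  assumes n2: "2 \<le> n" and i0: "i0 < 2*n" and j0: "j0 < 2*n" and par: "odd (i0+j0)"
    and v: "v \<in> tor_V n"
  shows "(\<exists>r s. r<n \<and> s<n \<and> v = thz n i0 j0 r s) \<or> (\<exists>r s. r<n \<and> s<n \<and> v = tve n i0 j0 r s)"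
proof -
  obtain i j where ij: "v = (i,j)" "i < 2*n" "j < 2*n" "even (i+j)" using v unfolding tor_V_def by auto
  have n0: "0 < n" using n2 by simp
  show ?thesis
  proof (cases "even (i + (i0+1))")
    case True
    obtain r where r: "r<n" "(i0 + 1 + 2*r) mod (2*n) = i" using solve2[OF n0 ij(2), of "i0+1"] True i0 by auto
    have "even (j + (j0+2))" using True ij(4) par by presburger
    then obtain s where s: "s<n" "(j0 + 2 + 2*s) mod (2*n) = j" using solve2[OF n0 ij(3), of "j0+2"] j0 n2 by auto
    show ?thesis using r s ij unfolding thz_def by blast
  next
    case False
    then have e: "even (i + (i0+2))" by presburger
    obtain r where r: "r<n" "(i0 + 2 + 2*r) mod (2*n) = i" using solve2[OF n0 ij(2), of "i0+2"] e i0 by auto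
    have "even (j + (j0+1))" using False ij(4) par by presburger
    then obtain s where s: "s<n" "(j0 + 1 + 2*s) mod (2*n) = j" using solve2[OF n0 ij(3), of "j0+1"] j0 n2 by auto
    show ?thesis using r s ij unfolding tve_def by blast
  qed
qed

lemma torus_span:
  fixes HP HQ :: "nat \<times> nat \<Rightarrow> nat \<times> nat \<Rightarrow> 'a::field" and X :: "nat \<times> nat \<Rightarrow> 'a"
  assumes n2: "2 \<le> n" and i0: "i0 < 2*n" and j0: "j0 < 2*n" and par: "odd (i0+j0)"
    and Pm: "\<And>r s. r<n \<Longrightarrow> s<n \<Longrightarrow> tvx n i0 j0 r s \<in> P"
    and Qm: "\<And>r s. r<n \<Longrightarrow> s<n \<Longrightarrow> tfc n i0 j0 r s \<in> Q"
    and labP: "labeling n P HP" and labQ: "labeling n Q HQ"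
    and orthPQ: "\<forall>p\<in>P. \<forall>q\<in>Q. (\<Sum>v\<in>tor_V n. HP p v * HQ q v) = 0"
    and flowX: "\<forall>p\<in>P. (\<Sum>v\<in>tor_V n. HP p v * X v) = 0"
    and cut: "\<forall>v\<in>tor_V n. fst v = i0 \<or> snd v = j0 \<longrightarrow> X v = 0"
  shows "\<exists>a. \<forall>v\<in>tor_V n. X v = (\<Sum>p\<in>{..<n}\<times>{..<n}. a p * HQ (tfc n i0 j0 (fst p) (snd p)) v)"
proof -
  have n0: "0 < n" using n2 by simp
  have heV: "\<And>r s. r<n \<Longrightarrow> s<n \<Longrightarrow> thz n i0 j0 r s \<in> tor_V n"
    using par n0 by (auto simp: tor_V_def thz_def even_mod_even)
  have veV: "\<And>r s. r<n \<Longrightarrow> s<n \<Longrightarrow> tve n i0 j0 r s \<in> tor_V n"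
    using par n0 by (auto simp: tor_V_def tve_def even_mod_even)
  have he_inj: "\<And>r s r' s'. r<n \<Longrightarrow> s<n \<Longrightarrow> r'<n \<Longrightarrow> s'<n \<Longrightarrow> thz n i0 j0 r s = thz n i0 j0 r' s' \<Longrightarrow> r = r' \<and> s = s'"
  proof -
    fix r s r' s' assume a: "r<n" "s<n" "r'<n" "s'<n" "thz n i0 j0 r s = thz n i0 j0 r' s'"
    then have "(i0 + 1 + 2*r) mod (2*n) = (i0 + 1 + 2*r') mod (2*n)" "(j0 + 2 + 2*s) mod (2*n) = (j0 + 2 + 2*s') mod (2*n)"
      unfolding thz_def by auto
    then have "2*r = 2*r'" "2*s = 2*s'" using mod_inj2[of "2*r" "2*n" "2*r'" "i0+1"] mod_inj2[of "2*s" "2*n" "2*s'" "j0+2"] a by auto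
    then show "r = r' \<and> s = s'" by simp
  qed
  have ve_inj: "\<And>r s r' s'. r<n \<Longrightarrow> s<n \<Longrightarrow> r'<n \<Longrightarrow> s'<n \<Longrightarrow> tve n i0 j0 r s = tve n i0 j0 r' s' \<Longrightarrow> r = r' \<and> s = s'"
  proof -
    fix r s r' s' assume a: "r<n" "s<n" "r'<n" "s'<n" "tve n i0 j0 r s = tve n i0 j0 r' s'"
    then have "(i0 + 2 + 2*r) mod (2*n) = (i0 + 2 + 2*r') mod (2*n)" "(j0 + 1 + 2*s) mod (2*n) = (j0 + 1 + 2*s') mod (2*n)"
      unfolding tve_def by auto
    then have "2*r = 2*r'" "2*s = 2*s'" using mod_inj2[of "2*r" "2*n" "2*r'" "i0+2"] mod_inj2[of "2*s" "2*n" "2*s'" "j0+1"] a by auto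
    then show "r = r' \<and> s = s'" by simp
  qed
  have he_ve: "\<And>r s r' s'. r<n \<Longrightarrow> s<n \<Longrightarrow> r'<n \<Longrightarrow> s'<n \<Longrightarrow> thz n i0 j0 r s \<noteq> tve n i0 j0 r' s'"
  proof
    fix r s r' s' assume "thz n i0 j0 r s = tve n i0 j0 r' s'"
    then have "(i0 + 1 + 2*r) mod (2*n) = (i0 + 2 + 2*r') mod (2*n)" unfolding thz_def tve_def by auto
    then have "even ((i0 + 1 + 2*r) mod (2*n)) = even ((i0 + 2 + 2*r') mod (2*n))" by simp
    then show False by (simp add: even_mod_even)
  qed
  have vx_adj: "\<And>r s v. r<n \<Longrightarrow> s<n \<Longrightarrow> v \<in> tor_V n \<Longrightarrow> HP (tvx n i0 j0 r s) v \<noteq> 0 \<Longrightarrow>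
      v = thz n i0 j0 r s \<or> v = thz n i0 j0 r (if s = 0 then n-1 else s-1) \<or> v = tve n i0 j0 r s \<or> v = tve n i0 j0 (if r = 0 then n-1 else r-1) s"
  proof -
    fix r s v assume a: "r<n" "s<n" "v \<in> tor_V n" "HP (tvx n i0 j0 r s) v \<noteq> 0"
    then have "tor_adj n (tvx n i0 j0 r s) v" using labP Pm unfolding labeling_def by blast
    then show "v = thz n i0 j0 r s \<or> v = thz n i0 j0 r (if s = 0 then n-1 else s-1) \<or> v = tve n i0 j0 r s \<or> v = tve n i0 j0 (if r = 0 then n-1 else r-1) s"
      using vx_nb[OF n0 a(1,2)] by blast
  qed
  have vx_nz_h: "\<And>r s. r<n \<Longrightarrow> 0<s \<Longrightarrow> s<n \<Longrightarrow> HP (tvx n i0 j0 r s) (thz n i0 j0 r (s-1)) \<noteq> 0"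
  proof -
    fix r s assume a: "r<n" "0<s" "s<n"
    have "tor_adj n (tvx n i0 j0 r s) (thz n i0 j0 r (s-1))" using vx_nb[OF n0 a(1,3)] a by simp
    then show "HP (tvx n i0 j0 r s) (thz n i0 j0 r (s-1)) \<noteq> 0"
      using labP Pm[OF a(1,3)] heV[of r "s-1"] a unfolding labeling_def by simp
  qed
  have vx_nz_v: "\<And>r s. 0<r \<Longrightarrow> r<n \<Longrightarrow> s<n \<Longrightarrow> HP (tvx n i0 j0 r s) (tve n i0 j0 (r-1) s) \<noteq> 0"
  proof -
    fix r s assume a: "0<r" "r<n" "s<n"
    have "tor_adj n (tvx n i0 j0 r s) (tve n i0 j0 (r-1) s)" using vx_nb[OF n0 a(2,3)] a by simp
    then show "HP (tvx n i0 j0 r s) (tve n i0 j0 (r-1) s) \<noteq> 0"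
      using labP Pm[OF a(2,3)] veV[of "r-1" s] a unfolding labeling_def by simp
  qed
  have fc_adj: "\<And>r s v. r+1<n \<Longrightarrow> s+1<n \<Longrightarrow> v \<in> tor_V n \<Longrightarrow> HQ (tfc n i0 j0 r s) v \<noteq> 0 \<Longrightarrow>
      v = thz n i0 j0 r s \<or> v = thz n i0 j0 (r+1) s \<or> v = tve n i0 j0 r s \<or> v = tve n i0 j0 r (s+1)"
  proof -
    fix r s v assume a: "r+1<n" "s+1<n" "v \<in> tor_V n" "HQ (tfc n i0 j0 r s) v \<noteq> 0"
    then have "tor_adj n (tfc n i0 j0 r s) v" using labQ Qm[of r s] unfolding labeling_def by simp
    then show "v = thz n i0 j0 r s \<or> v = thz n i0 j0 (r+1) s \<or> v = tve n i0 j0 r s \<or> v = tve n i0 j0 r (s+1)"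
      using fc_nb[OF n0] by blast
  qed
  have fc_nz: "\<And>r s. r+1<n \<Longrightarrow> s+1<n \<Longrightarrow> HQ (tfc n i0 j0 r s) (tve n i0 j0 r (s+1)) \<noteq> 0"
  proof -
    fix r s assume a: "r+1<n" "s+1<n"
    have "tor_adj n (tfc n i0 j0 r s) (tve n i0 j0 r (s+1))" using fc_nb[OF n0] by simp
    then show "HQ (tfc n i0 j0 r s) (tve n i0 j0 r (s+1)) \<noteq> 0"
      using labQ Qm[of r s] veV[of r "s+1"] a unfolding labeling_def by simp
  qed
  have orth: "\<And>r s r' s'. r<n \<Longrightarrow> s<n \<Longrightarrow> r'+1<n \<Longrightarrow> s'+1<n \<Longrightarrow>
      (\<Sum>v\<in>tor_V n. HP (tvx n i0 j0 r s) v * HQ (tfc n i0 j0 r' s') v) = 0"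
    using orthPQ Pm Qm by simp
  have fl: "\<forall>r<n. \<forall>s<n. (\<Sum>v\<in>tor_V n. HP (tvx n i0 j0 r s) v * X v) = 0"
    using flowX Pm by simp
  have sup: "\<forall>v\<in>tor_V n. X v \<noteq> 0 \<longrightarrow> (\<exists>r t. r<n \<and> t+1<n \<and> v = thz n i0 j0 r t) \<or> (\<exists>r t. r+1<n \<and> t<n \<and> v = tve n i0 j0 r t)"
  proof (intro ballI impI)
    fix v assume v: "v \<in> tor_V n" "X v \<noteq> 0"
    then have nc: "fst v \<noteq> i0" "snd v \<noteq> j0" using cut by auto
    from cover[OF n2 i0 j0 par v(1)]
    show "(\<exists>r t. r<n \<and> t+1<n \<and> v = thz n i0 j0 r t) \<or> (\<exists>r t. r+1<n \<and> t<n \<and> v = tve n i0 j0 r t)"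
    proof (elim disjE exE conjE)
      fix r s assume rs: "r<n" "s<n" "v = thz n i0 j0 r s"
      have "s \<noteq> n-1"
      proof
        assume "s = n-1"
        then have eq: "j0 + 2 + 2*s = j0 + 2*n" using n0 by simp
        have "snd v = (j0 + 2 + 2*s) mod (2*n)" using rs unfolding thz_def by simp
        also have "\<dots> = (j0 + 2*n) mod (2*n)" by (simp only: eq)
        also have "\<dots> = j0" using j0 by simp
        finally have "snd v = j0" .
        then show False using nc by simp
      qed
      then show ?thesis using rs by (intro disjI1) (rule exI[of _ r], rule exI[of _ s], simp)
    next
      fix r s assume rs: "r<n" "s<n" "v = tve n i0 j0 r s"
      have "r \<noteq> n-1"
      proof
        assume "r = n-1"
        then have eq: "i0 + 2 + 2*r = i0 + 2*n" using n0 by simp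
        have "fst v = (i0 + 2 + 2*r) mod (2*n)" using rs unfolding tve_def by simp
        also have "\<dots> = (i0 + 2*n) mod (2*n)" by (simp only: eq)
        also have "\<dots> = i0" using i0 by simp
        finally have "fst v = i0" .
        then show False using nc by simp
      qed
      then show ?thesis using rs by (intro disjI2) (rule exI[of _ r], rule exI[of _ s], simp)
    qed
  qed
  show ?thesis
    using grid_final[where n=n and V="tor_V n" and HP=HP and HQ=HQ and vx="tvx n i0 j0" and fc="tfc n i0 j0"
        and he="thz n i0 j0" and ve="tve n i0 j0" and X=X,
        OF n2 finite_torV heV veV he_inj ve_inj he_ve vx_adj vx_nz_h vx_nz_v fc_adj fc_nz orth fl sup] .
qed




context
  fixes m :: nat and b :: "nat \<Rightarrow> 'a::{field,finite}"
  assumes basis: "F2_basis m b" and c2: "(1::'a) + 1 = 0"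
begin

lemma two0: "(2::'a) = 0" using c2 by simp

lemma emb_add: "(emb (c + d) :: 'a) = emb c + emb d"
  by (cases c; cases d) (simp_all add: emb_def two0)

lemma emb_mult: "(emb (c * d) :: 'a) = emb c * emb d"
  by (cases c; cases d) (simp_all add: emb_def)

lemma emb_0[simp]: "(emb 0 :: 'a) = 0" and emb_1[simp]: "(emb 1 :: 'a) = 1"
  by (simp_all add: emb_def)

lemma coord_rep: "(\<forall>k. m \<le> k \<longrightarrow> coord m b a k = 0) \<and> a = (\<Sum>k<m. emb (coord m b a k) * b k)"
proof -
  from basis have "\<exists>!c::nat \<Rightarrow> bit. (\<forall>k. m \<le> k \<longrightarrow> c k = 0) \<and> a = (\<Sum>k<m. emb (c k) * b k)"
    unfolding F2_basis_def by blast
  then show ?thesis unfolding coord_def by (rule theI')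
qed

lemma coord_unique:
  assumes "\<forall>k. m \<le> k \<longrightarrow> c k = 0" "a = (\<Sum>k<m. emb (c k) * b k)"
  shows "coord m b a = c"
proof -
  from basis have "\<exists>!c::nat \<Rightarrow> bit. (\<forall>k. m \<le> k \<longrightarrow> c k = 0) \<and> a = (\<Sum>k<m. emb (c k) * b k)"
    unfolding F2_basis_def by blast
  then show ?thesis using assms coord_rep[of a] by blast
qed

lemma coord_expand:
  assumes "\<forall>k. m \<le> k \<longrightarrow> c k = 0"
  shows "coord m b (\<Sum>k<m. emb (c k) * b k) = c"
  using coord_unique[OF assms] by simp

lemma coord_add: "coord m b (a + a') k = coord m b a k + coord m b a' k"
proof -
  have "coord m b (a + a') = (\<lambda>k. coord m b a k + coord m b a' k)"
  proof (rule coord_unique)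
    show "\<forall>k. m \<le> k \<longrightarrow> coord m b a k + coord m b a' k = 0" using coord_rep by simp
    have "a + a' = (\<Sum>k<m. emb (coord m b a k) * b k) + (\<Sum>k<m. emb (coord m b a' k) * b k)"
      using coord_rep by metis
    also have "\<dots> = (\<Sum>k<m. emb (coord m b a k) * b k + emb (coord m b a' k) * b k)"
      by (simp only: sum.distrib)
    also have "\<dots> = (\<Sum>k<m. emb (coord m b a k + coord m b a' k) * b k)"
      by (rule sum.cong) (simp_all only: emb_add distrib_right)
    finally show "a + a' = (\<Sum>k<m. emb (coord m b a k + coord m b a' k) * b k)" .
  qed
  then show ?thesis by simp
qed

lemma coord_zero: "coord m b 0 k = 0"
proof -
  have "coord m b 0 = (\<lambda>k. 0)" by (rule coord_unique) auto
  then show ?thesis by simp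
qed

lemma coord_sum: "coord m b (\<Sum>i\<in>I. f i) k = (\<Sum>i\<in>I. coord m b (f i) k)"
proof (cases "finite I")
  case True then show ?thesis
    by (induction I rule: finite_induct) (simp_all add: coord_zero coord_add)
next
  case False then show ?thesis by (simp add: coord_zero)
qed

lemma coord_emb_mult: "coord m b (emb c * a) k = c * coord m b a k"
  by (cases c) (simp_all add: coord_zero)

lemma coord_eq0: "(\<forall>k<m. coord m b a k = 0) \<Longrightarrow> a = 0"
  using coord_rep[of a] by (metis (no_types, lifting) emb_0 lessThan_iff mult_zero_left sum.neutral)

lemma coord_basis: "l < m \<Longrightarrow> coord m b (b l) k = (if k = l then 1 else 0)"
proof -
  assume l: "l < m"
  have "coord m b (b l) = (\<lambda>k. if k = l then 1 else 0)"
  proof (rule coord_unique)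
    show "\<forall>k. m \<le> k \<longrightarrow> (if k = l then 1 else 0) = (0::bit)" using l by auto
    have "(\<Sum>k<m. emb (if k = l then 1 else 0) * b k) = (\<Sum>k<m. if k = l then b k else 0)"
      by (rule sum.cong) auto
    also have "\<dots> = b l" using l by simp
    finally show "b l = (\<Sum>k<m. emb (if k = l then 1 else 0) * b k)" by simp
  qed
  then show ?thesis by simp
qed

definition lam :: "'a \<Rightarrow> bit" where "lam a = coord m b a 0"

lemma lam_add: "lam (a + a') = lam a + lam a'"
  by (simp add: lam_def coord_add)
lemma lam_zero: "lam 0 = 0"
  by (simp add: lam_def coord_zero)
lemma lam_sum: "lam (\<Sum>i\<in>I. f i) = (\<Sum>i\<in>I. lam (f i))"
  by (simp add: lam_def coord_sum)
lemma lam_emb_mult: "lam (emb c * a) = c * lam a"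
  by (simp add: lam_def coord_emb_mult)

lemma lam_expand: "lam (w * a) = (\<Sum>l<m. coord m b a l * lam (w * b l))"
proof -
  have "w * a = (\<Sum>l<m. emb (coord m b a l) * (w * b l))"
    using coord_rep[of a] by (metis (no_types, lifting) mult.left_commute sum.cong sum_distrib_left)
  then have "lam (w * a) = lam (\<Sum>l<m. emb (coord m b a l) * (w * b l))" by simp
  also have "\<dots> = (\<Sum>l<m. coord m b a l * lam (w * b l))"
    by (simp add: lam_sum lam_emb_mult)
  finally show ?thesis .
qed

lemma lam_inj:
  assumes m1: "1 \<le> m" and eq: "\<forall>l<m. lam (w * b l) = lam (w' * b l)"
  shows "w = w'"
proof (rule ccontr)
  assume ne: "w \<noteq> w'"
  have d: "\<forall>l<m. lam ((w - w') * b l) = 0"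
  proof (intro allI impI)
    fix l assume "l < m"
    have "lam (w * b l) = lam ((w - w') * b l) + lam (w' * b l)"
      by (metis diff_add_cancel distrib_right lam_add)
    with eq \<open>l < m\<close> show "lam ((w - w') * b l) = 0"
      by (metis add_cancel_left_left)
  qed
  have "lam ((w - w') * (inverse (w - w') * b 0)) = 0"
    by (subst lam_expand) (simp add: d)
  moreover have "(w - w') * (inverse (w - w') * b 0) = b 0" using ne by simp
  moreover have "lam (b 0) = 1" using m1 by (simp add: lam_def coord_basis)
  ultimately show False by simp
qed

lemma lam_surj:
  assumes m1: "1 \<le> m"
  shows "\<exists>w. \<forall>l<m. lam (w * b l) = c l"
proof -
  let ?S = "{c::nat \<Rightarrow> bit. \<forall>k. m \<le> k \<longrightarrow> c k = 0}"
  define f where "f w = (\<lambda>l. if l < m then lam (w * b l) else 0)" for w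
  have inj: "inj f"
  proof (rule injI)
    fix w w' assume "f w = f w'"
    then have "\<forall>l<m. lam (w * b l) = lam (w' * b l)" unfolding f_def by metis
    then show "w = w'" using lam_inj[OF m1] by blast
  qed
  have sub: "range f \<subseteq> ?S" unfolding f_def by auto
  have Seq: "?S = range (coord m b)"
  proof
    show "?S \<subseteq> range (coord m b)"
    proof
      fix c assume "c \<in> ?S"
      then have "coord m b (\<Sum>k<m. emb (c k) * b k) = c" using coord_expand by blast
      then show "c \<in> range (coord m b)" by (metis rangeI)
    qed
    show "range (coord m b) \<subseteq> ?S" using coord_rep by blast
  qed
  have fin: "finite ?S" using Seq by simp
  have "card (range f) = card (UNIV::'a set)" using inj by (simp add: card_image)
  also have "\<dots> \<ge> card ?S" unfolding Seq by (rule card_image_le) simp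
  moreover have "card (range f) \<le> card ?S" by (rule card_mono[OF fin sub])
  ultimately have "range f = ?S" using card_subset_eq[OF fin sub] by linarith
  define c' where "c' = (\<lambda>l. if l < m then c l else 0)"
  have "c' \<in> ?S" unfolding c'_def by auto
  then obtain w where "f w = c'" using \<open>range f = ?S\<close> by (metis imageE)
  then have "\<forall>l<m. lam (w * b l) = c l" unfolding f_def c'_def by (metis)
  then show ?thesis by blast
qed


lemma bsum: "(\<Sum>p\<in>bsupp n m. f p) = (\<Sum>v\<in>tor_V n. \<Sum>l<m. f (v,l))"
  unfolding bsupp_def by (simp add: sum.cartesian_product split_def)

lemma bsum2: "(\<Sum>(v,l)\<in>bsupp n m. f v l) = (\<Sum>v\<in>tor_V n. \<Sum>l<m. f v l)"
  unfolding bsupp_def by (simp add: sum.cartesian_product)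

lemma X_of:
  assumes x: "x \<in> bcodeX n m b HX"
  defines "X \<equiv> (\<lambda>v. if v \<in> tor_V n then (\<Sum>l<m. emb (x (v,l)) * b l) else 0)"
  shows "X \<in> qcode n (tor_CX n) HX" and "\<And>v l. v \<in> tor_V n \<Longrightarrow> coord m b (X v) l = x (v,l)"
    and "\<And>v. v \<in> tor_V n \<Longrightarrow> X v \<noteq> 0 \<Longrightarrow> \<exists>l<m. x (v,l) \<noteq> 0"
proof -
  have xz: "\<And>p. p \<notin> bsupp n m \<Longrightarrow> x p = 0" using x unfolding bcodeX_def by blast
  have xc: "\<And>c k. c \<in> tor_CX n \<Longrightarrow> k < m \<Longrightarrow> (\<Sum>(v,l)\<in>bsupp n m. mulmat m b (HX c v) k l * x (v,l)) = 0"
    using x unfolding bcodeX_def by blast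
  show co: "\<And>v l. v \<in> tor_V n \<Longrightarrow> coord m b (X v) l = x (v,l)"
  proof -
    fix v l assume v: "v \<in> tor_V n"
    have "coord m b (\<Sum>l<m. emb (x (v,l)) * b l) = (\<lambda>l. x (v,l))"
      by (rule coord_expand) (use xz in \<open>auto simp: bsupp_def\<close>)
    then show "coord m b (X v) l = x (v,l)" using v unfolding X_def by simp
  qed
  show "\<And>v. v \<in> tor_V n \<Longrightarrow> X v \<noteq> 0 \<Longrightarrow> \<exists>l<m. x (v,l) \<noteq> 0"
  proof (rule ccontr)
    fix v assume v: "v \<in> tor_V n" "X v \<noteq> 0" "\<not> (\<exists>l<m. x (v,l) \<noteq> 0)"
    then have "X v = (\<Sum>l<m. emb (x (v,l)) * b l)" unfolding X_def by simp
    also have "\<dots> = 0" using v(3) by (intro sum.neutral) auto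
    finally show False using v(2) by simp
  qed
  show "X \<in> qcode n (tor_CX n) HX" unfolding qcode_def
  proof (intro CollectI conjI allI impI ballI)
    fix v assume "v \<notin> tor_V n" then show "X v = 0" unfolding X_def by simp
  next
    fix c assume c: "c \<in> tor_CX n"
    show "(\<Sum>v\<in>tor_V n. HX c v * X v) = 0"
    proof (rule coord_eq0, intro allI impI)
      fix k assume k: "k < m"
      have "coord m b (\<Sum>v\<in>tor_V n. HX c v * X v) k = (\<Sum>v\<in>tor_V n. coord m b (HX c v * X v) k)"
        by (rule coord_sum)
      also have "\<dots> = (\<Sum>v\<in>tor_V n. \<Sum>l<m. mulmat m b (HX c v) k l * x (v,l))"
      proof (rule sum.cong[OF refl])
        fix v assume v: "v \<in> tor_V n"
        have "HX c v * X v = (\<Sum>l<m. emb (x (v,l)) * (HX c v * b l))"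
          using v unfolding X_def by (simp add: sum_distrib_left mult.left_commute)
        then have "coord m b (HX c v * X v) k = (\<Sum>l<m. x (v,l) * coord m b (HX c v * b l) k)"
          by (simp add: coord_sum coord_emb_mult)
        also have "(\<Sum>l<m. x (v,l) * coord m b (HX c v * b l) k) = (\<Sum>l<m. mulmat m b (HX c v) k l * x (v,l))"
          unfolding mulmat_def by (rule sum.cong[OF refl]) (rule mult.commute)
        finally show "coord m b (HX c v * X v) k = (\<Sum>l<m. mulmat m b (HX c v) k l * x (v,l))" .
      qed
      also have "\<dots> = 0" using xc[OF c k] by (simp add: bsum2)
      finally show "coord m b (\<Sum>v\<in>tor_V n. HX c v * X v) k = 0" .
    qed
  qed
qed

lemma mult_expand: "w * a = (\<Sum>k<m. emb (coord m b a k) * (w * b k))"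
proof -
  have "w * a = w * (\<Sum>k<m. emb (coord m b a k) * b k)" using coord_rep[of a] by simp
  also have "\<dots> = (\<Sum>k<m. w * (emb (coord m b a k) * b k))" by (rule sum_distrib_left)
  also have "\<dots> = (\<Sum>k<m. emb (coord m b a k) * (w * b k))" by (rule sum.cong[OF refl]) (rule mult.left_commute)
  finally show ?thesis .
qed

lemma coord_mult_expand: "coord m b (w * a) l = (\<Sum>k<m. coord m b a k * coord m b (w * b k) l)"
proof -
  have "coord m b (w * a) l = (\<Sum>k<m. coord m b (emb (coord m b a k) * (w * b k)) l)"
    by (subst mult_expand) (rule coord_sum)
  also have "\<dots> = (\<Sum>k<m. coord m b a k * coord m b (w * b k) l)"
    by (rule sum.cong[OF refl]) (rule coord_emb_mult)
  finally show ?thesis .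
qed

lemma Zorth:
  assumes z: "z \<in> bcodeZ n m b HZ" and q: "q \<in> tor_CZ n"
  shows "(\<Sum>v\<in>tor_V n. \<Sum>l<m. coord m b (HZ q v * a) l * z (v,l)) = 0"
proof -
  have zc: "\<And>k. k < m \<Longrightarrow> (\<Sum>v\<in>tor_V n. \<Sum>l<m. mulmat m b (HZ q v) l k * z (v,l)) = 0"
    using z q unfolding bcodeZ_def by (simp only: bsum2 mem_Collect_eq)
  have "(\<Sum>v\<in>tor_V n. \<Sum>l<m. coord m b (HZ q v * a) l * z (v,l))
      = (\<Sum>v\<in>tor_V n. \<Sum>l<m. \<Sum>k<m. coord m b a k * (mulmat m b (HZ q v) l k * z (v,l)))"
  proof (rule sum.cong[OF refl], rule sum.cong[OF refl])
    fix v l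
    show "coord m b (HZ q v * a) l * z (v,l) = (\<Sum>k<m. coord m b a k * (mulmat m b (HZ q v) l k * z (v,l)))"
      unfolding coord_mult_expand[of "HZ q v" a l] mulmat_def by (simp only: sum_distrib_right mult.assoc)
  qed
  also have "\<dots> = (\<Sum>v\<in>tor_V n. \<Sum>k<m. \<Sum>l<m. coord m b a k * (mulmat m b (HZ q v) l k * z (v,l)))"
    by (rule sum.cong[OF refl]) (rule sum.swap)
  also have "\<dots> = (\<Sum>k<m. \<Sum>v\<in>tor_V n. \<Sum>l<m. coord m b a k * (mulmat m b (HZ q v) l k * z (v,l)))"
    by (rule sum.swap)
  also have "\<dots> = (\<Sum>k<m. coord m b a k * (\<Sum>v\<in>tor_V n. \<Sum>l<m. mulmat m b (HZ q v) l k * z (v,l)))"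
    by (simp only: sum_distrib_left)
  also have "\<dots> = (\<Sum>k<m. coord m b a k * 0)"
    by (rule sum.cong[OF refl]) (simp only: zc lessThan_iff)
  also have "\<dots> = 0" by simp
  finally show ?thesis .
qed

lemma avoid:
  assumes "finite A" "card A < n"
  shows "\<exists>i<2*n. (even i \<longleftrightarrow> e) \<and> i \<notin> A"
proof (rule ccontr)
  assume neg: "\<not> ?thesis"
  have sub: "(\<lambda>k. 2*k + (if e then 0 else 1)) ` {..<n} \<subseteq> A"
  proof
    fix i assume "i \<in> (\<lambda>k. 2*k + (if e then 0 else 1)) ` {..<n}"
    then obtain k where k: "k < n" "i = 2*k + (if e then 0 else 1)" by blast
    then have "i < 2*n" "even i \<longleftrightarrow> e" by auto
    then show "i \<in> A" using neg by (metis (no_types))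
  qed
  have "inj_on (\<lambda>k::nat. 2*k + (if e then 0 else 1)) {..<n}" by (rule inj_onI) auto
  then have "card ((\<lambda>k. 2*k + (if e then 0 else 1)) ` {..<n}) = n" by (simp add: card_image)
  then have "n \<le> card A" using card_mono[OF assms(1) sub] by simp
  then show False using assms by simp
qed

lemma memb1:
  assumes "even i0" "odd j0" "r < n" "s < n"
  shows "tvx n i0 j0 r s \<in> tor_CX n" "tfc n i0 j0 r s \<in> tor_CZ n"
  using assms by (auto simp: tvx_def tfc_def tor_CX_def tor_CZ_def even_mod_even)

lemma memb2:
  assumes "odd i0" "even j0" "r < n" "s < n"
  shows "tvx n i0 j0 r s \<in> tor_CZ n" "tfc n i0 j0 r s \<in> tor_CX n"
  using assms by (auto simp: tvx_def tfc_def tor_CX_def tor_CZ_def even_mod_even)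

lemma small_support:
  assumes "\<And>v. v \<in> tor_V n \<Longrightarrow> X v \<noteq> 0 \<Longrightarrow> \<exists>l<m. y (v,l) \<noteq> 0" and "hweight n m y < n"
  shows "finite {v \<in> tor_V n. X v \<noteq> 0} \<and> card {v \<in> tor_V n. X v \<noteq> 0} < n"
proof -
  let ?S = "{v \<in> tor_V n. X v \<noteq> 0}" and ?T = "{p \<in> bsupp n m. y p \<noteq> 0}"
  have finS: "finite ?S" using finite_torV[of n] by simp
  have finT: "finite ?T" unfolding bsupp_def using finite_torV[of n] by simp
  have "?S \<subseteq> fst ` ?T"
  proof
    fix v assume "v \<in> ?S"
    then obtain l where "l<m" "y (v,l) \<noteq> 0" "v \<in> tor_V n" using assms(1) by blast
    then have "(v,l) \<in> ?T" unfolding bsupp_def by simp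
    then show "v \<in> fst ` ?T" by force
  qed
  then have "card ?S \<le> card (fst ` ?T)" using finT by (simp add: card_mono)
  also have "\<dots> \<le> card ?T" using finT by (rule card_image_le)
  also have "\<dots> = hweight n m y" unfolding hweight_def by simp
  finally show ?thesis using finS assms(2) by simp
qed

lemma choose_cut:
  assumes "finite S" "card S < n"
  shows "\<exists>i0 j0. i0 < 2*n \<and> j0 < 2*n \<and> (even i0 \<longleftrightarrow> e) \<and> (odd j0 \<longleftrightarrow> e) \<and> i0 \<notin> fst ` S \<and> j0 \<notin> snd ` S"
proof -
  have "card (fst ` S) < n" using assms card_image_le[of S fst] by linarith
  then obtain i0 where i0: "i0 < 2*n" "even i0 \<longleftrightarrow> e" "i0 \<notin> fst ` S" using avoid[of "fst ` S" n e] assms by auto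
  have "card (snd ` S) < n" using assms card_image_le[of S snd] by linarith
  then obtain j0 where j0: "j0 < 2*n" "even j0 \<longleftrightarrow> \<not> e" "j0 \<notin> snd ` S" using avoid[of "snd ` S" n "\<not> e"] assms by auto
  show ?thesis using i0 j0 by auto
qed

lemma part1:
  assumes n2: "2 \<le> n" and labX: "labeling n (tor_CX n) HX" and labZ: "labeling n (tor_CZ n) HZ"
    and orth: "\<forall>p\<in>tor_CX n. \<forall>q\<in>tor_CZ n. (\<Sum>v\<in>tor_V n. HX p v * HZ q v) = 0"
    and x: "x \<in> bcodeX n m b HX" and hw: "hweight n m x < n"
  shows "x \<in> bdual n m (bcodeZ n m b HZ)"
proof -
  define X where "X \<equiv> (\<lambda>v. if v \<in> tor_V n then (\<Sum>l<m. emb (x (v,l)) * b l) else 0)"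
  have Xq: "X \<in> qcode n (tor_CX n) HX" and Xc: "\<And>v l. v \<in> tor_V n \<Longrightarrow> coord m b (X v) l = x (v,l)"
    and Xs: "\<And>v. v \<in> tor_V n \<Longrightarrow> X v \<noteq> 0 \<Longrightarrow> \<exists>l<m. x (v,l) \<noteq> 0"
    using X_of[OF x] unfolding X_def by blast+
  define S where "S = {v \<in> tor_V n. X v \<noteq> 0}"
  have S: "finite S" "card S < n" using small_support[OF Xs hw] unfolding S_def by auto
  obtain i0 j0 where ij: "i0 < 2*n" "j0 < 2*n" "even i0" "odd j0" "i0 \<notin> fst ` S" "j0 \<notin> snd ` S"
    using choose_cut[OF S, of True] by auto
  have par: "odd (i0 + j0)" using ij by simp
  have cut: "\<forall>v\<in>tor_V n. fst v = i0 \<or> snd v = j0 \<longrightarrow> X v = 0"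
  proof (intro ballI impI)
    fix v assume v: "v \<in> tor_V n" "fst v = i0 \<or> snd v = j0"
    show "X v = 0"
    proof (rule ccontr)
      assume "X v \<noteq> 0"
      then have "v \<in> S" using v unfolding S_def by simp
      then show False using v ij by force
    qed
  qed
  have fl: "\<forall>p\<in>tor_CX n. (\<Sum>v\<in>tor_V n. HX p v * X v) = 0" using Xq unfolding qcode_def by blast
  obtain a where a: "\<forall>v\<in>tor_V n. X v = (\<Sum>p\<in>{..<n}\<times>{..<n}. a p * HZ (tfc n i0 j0 (fst p) (snd p)) v)"
    using torus_span[OF n2 ij(1,2) par memb1(1)[OF ij(3,4)] memb1(2)[OF ij(3,4)] labX labZ orth fl cut] by blast
  let ?I = "{..<n}\<times>{..<n}" and ?g = "\<lambda>p. tfc n i0 j0 (fst p) (snd p)"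
  show ?thesis unfolding bdual_def
  proof (intro CollectI conjI allI impI ballI)
    fix p assume "p \<notin> bsupp n m" then show "x p = 0" using x unfolding bcodeX_def by blast
  next
    fix z assume z: "z \<in> bcodeZ n m b HZ"
    have "(\<Sum>p\<in>bsupp n m. z p * x p) = (\<Sum>p\<in>bsupp n m. x p * z p)" by (simp only: mult.commute)
    also have "\<dots> = (\<Sum>v\<in>tor_V n. \<Sum>l<m. x (v,l) * z (v,l))" by (rule bsum)
    also have "\<dots> = (\<Sum>v\<in>tor_V n. \<Sum>l<m. \<Sum>p\<in>?I. coord m b (HZ (?g p) v * a p) l * z (v,l))"
    proof (rule sum.cong[OF refl], rule sum.cong[OF refl])
      fix v l assume v: "v \<in> tor_V n"
      have "x (v,l) = coord m b (X v) l" using Xc[OF v] by simp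
      also have "\<dots> = coord m b (\<Sum>p\<in>?I. a p * HZ (?g p) v) l" using a v by simp
      also have "\<dots> = (\<Sum>p\<in>?I. coord m b (HZ (?g p) v * a p) l)"
        by (simp only: coord_sum mult.commute)
      finally show "x (v,l) * z (v,l) = (\<Sum>p\<in>?I. coord m b (HZ (?g p) v * a p) l * z (v,l))"
        by (simp only: sum_distrib_right)
    qed
    also have "\<dots> = (\<Sum>v\<in>tor_V n. \<Sum>p\<in>?I. \<Sum>l<m. coord m b (HZ (?g p) v * a p) l * z (v,l))"
      by (rule sum.cong[OF refl]) (rule sum.swap)
    also have "\<dots> = (\<Sum>p\<in>?I. \<Sum>v\<in>tor_V n. \<Sum>l<m. coord m b (HZ (?g p) v * a p) l * z (v,l))"
      by (rule sum.swap)
    also have "\<dots> = (\<Sum>p\<in>?I. 0)"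
    proof (rule sum.cong[OF refl])
      fix p assume "p \<in> ?I"
      then have "?g p \<in> tor_CZ n" using memb1(2)[OF ij(3,4)] by auto
      then show "(\<Sum>v\<in>tor_V n. \<Sum>l<m. coord m b (HZ (?g p) v * a p) l * z (v,l)) = 0"
        by (rule Zorth[OF z])
    qed
    also have "\<dots> = 0" by simp
    finally show "(\<Sum>p\<in>bsupp n m. z p * x p) = 0" .
  qed
qed

lemma part2:
  assumes n2: "2 \<le> n" and m1: "1 \<le> m" and labX: "labeling n (tor_CX n) HX" and labZ: "labeling n (tor_CZ n) HZ"
    and orth: "\<forall>p\<in>tor_CZ n. \<forall>q\<in>tor_CX n. (\<Sum>v\<in>tor_V n. HZ p v * HX q v) = 0"
    and z: "z \<in> bcodeZ n m b HZ" and hw: "hweight n m z < n"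
  shows "z \<in> bdual n m (bcodeX n m b HX)"
proof -
  define W where "W v = (if v \<in> tor_V n then (SOME w. \<forall>l<m. lam (w * b l) = z (v,l)) else 0)" for v
  have Wl: "\<And>v l. v \<in> tor_V n \<Longrightarrow> l < m \<Longrightarrow> lam (W v * b l) = z (v,l)"
  proof -
    fix v l assume v: "v \<in> tor_V n" and l: "l < m"
    have "\<forall>l<m. lam ((SOME w. \<forall>l<m. lam (w * b l) = z (v,l)) * b l) = z (v,l)"
      by (rule someI_ex) (rule lam_surj[OF m1])
    then show "lam (W v * b l) = z (v,l)" using v l unfolding W_def by simp
  qed
  have Wa: "\<And>v a. v \<in> tor_V n \<Longrightarrow> lam (W v * a) = (\<Sum>l<m. coord m b a l * z (v,l))"
  proof -
    fix v a assume v: "v \<in> tor_V n"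
    have "lam (W v * a) = (\<Sum>l<m. coord m b a l * lam (W v * b l))" by (rule lam_expand)
    also have "\<dots> = (\<Sum>l<m. coord m b a l * z (v,l))"
      by (rule sum.cong[OF refl]) (simp only: Wl[OF v] lessThan_iff)
    finally show "lam (W v * a) = (\<Sum>l<m. coord m b a l * z (v,l))" .
  qed
  have zc: "\<And>q k. q \<in> tor_CZ n \<Longrightarrow> k < m \<Longrightarrow> (\<Sum>v\<in>tor_V n. \<Sum>l<m. mulmat m b (HZ q v) l k * z (v,l)) = 0"
    using z unfolding bcodeZ_def by (simp only: bsum2 mem_Collect_eq)
  have Wq: "\<forall>q\<in>tor_CZ n. (\<Sum>v\<in>tor_V n. HZ q v * W v) = 0"
  proof
    fix q assume q: "q \<in> tor_CZ n"
    show "(\<Sum>v\<in>tor_V n. HZ q v * W v) = 0"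
    proof (rule lam_inj[OF m1], intro allI impI)
      fix k assume k: "k < m"
      have "(\<Sum>v\<in>tor_V n. HZ q v * W v) * b k = (\<Sum>v\<in>tor_V n. HZ q v * W v * b k)"
        by (rule sum_distrib_right)
      also have "\<dots> = (\<Sum>v\<in>tor_V n. W v * (HZ q v * b k))"
        by (rule sum.cong[OF refl]) (simp add: mult_ac)
      finally have "lam ((\<Sum>v\<in>tor_V n. HZ q v * W v) * b k) = lam (\<Sum>v\<in>tor_V n. W v * (HZ q v * b k))"
        by simp
      also have "\<dots> = (\<Sum>v\<in>tor_V n. lam (W v * (HZ q v * b k)))" by (rule lam_sum)
      also have "\<dots> = (\<Sum>v\<in>tor_V n. \<Sum>l<m. mulmat m b (HZ q v) l k * z (v,l))"
        unfolding mulmat_def by (rule sum.cong[OF refl]) (rule Wa)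
      also have "\<dots> = 0" using zc[OF q k] .
      also have "\<dots> = lam (0 * b k)" by (simp add: lam_zero)
      finally show "lam ((\<Sum>v\<in>tor_V n. HZ q v * W v) * b k) = lam (0 * b k)" .
    qed
  qed
  have Ws: "\<And>v. v \<in> tor_V n \<Longrightarrow> W v \<noteq> 0 \<Longrightarrow> \<exists>l<m. z (v,l) \<noteq> 0"
  proof (rule ccontr)
    fix v assume v: "v \<in> tor_V n" "W v \<noteq> 0" "\<not> (\<exists>l<m. z (v,l) \<noteq> 0)"
    have "\<forall>l<m. lam (W v * b l) = lam (0 * b l)" using Wl[OF v(1)] v(3) by (simp add: lam_zero)
    then have "W v = 0" by (rule lam_inj[OF m1])
    then show False using v(2) by simp
  qed
  define S where "S = {v \<in> tor_V n. W v \<noteq> 0}"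
  have S: "finite S" "card S < n" using small_support[OF Ws hw] unfolding S_def by auto
  obtain i0 j0 where ij: "i0 < 2*n" "j0 < 2*n" "odd i0" "even j0" "i0 \<notin> fst ` S" "j0 \<notin> snd ` S"
    using choose_cut[OF S, of False] by auto
  have par: "odd (i0 + j0)" using ij by simp
  have cut: "\<forall>v\<in>tor_V n. fst v = i0 \<or> snd v = j0 \<longrightarrow> W v = 0"
  proof (intro ballI impI)
    fix v assume v: "v \<in> tor_V n" "fst v = i0 \<or> snd v = j0"
    show "W v = 0"
    proof (rule ccontr)
      assume "W v \<noteq> 0"
      then have "v \<in> S" using v unfolding S_def by simp
      then show False using v ij by force
    qed
  qed
  obtain a where a: "\<forall>v\<in>tor_V n. W v = (\<Sum>p\<in>{..<n}\<times>{..<n}. a p * HX (tfc n i0 j0 (fst p) (snd p)) v)"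
    using torus_span[OF n2 ij(1,2) par memb2(1)[OF ij(3,4)] memb2(2)[OF ij(3,4)] labZ labX orth Wq cut] by blast
  let ?I = "{..<n}\<times>{..<n}" and ?g = "\<lambda>p. tfc n i0 j0 (fst p) (snd p)"
  show ?thesis unfolding bdual_def
  proof (intro CollectI conjI allI impI ballI)
    fix p assume "p \<notin> bsupp n m" then show "z p = 0" using z unfolding bcodeZ_def by blast
  next
    fix x assume x: "x \<in> bcodeX n m b HX"
    define X where "X \<equiv> (\<lambda>v. if v \<in> tor_V n then (\<Sum>l<m. emb (x (v,l)) * b l) else 0)"
    have Xq: "X \<in> qcode n (tor_CX n) HX" and Xc: "\<And>v l. v \<in> tor_V n \<Longrightarrow> coord m b (X v) l = x (v,l)"
      using X_of[OF x] unfolding X_def by blast+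
    have flX: "\<And>q. q \<in> tor_CX n \<Longrightarrow> (\<Sum>v\<in>tor_V n. HX q v * X v) = 0" using Xq unfolding qcode_def by blast
    have "(\<Sum>p\<in>bsupp n m. x p * z p) = (\<Sum>v\<in>tor_V n. \<Sum>l<m. x (v,l) * z (v,l))" by (rule bsum)
    also have "\<dots> = (\<Sum>v\<in>tor_V n. lam (W v * X v))"
    proof (rule sum.cong[OF refl])
      fix v assume v: "v \<in> tor_V n"
      show "(\<Sum>l<m. x (v,l) * z (v,l)) = lam (W v * X v)"
        unfolding Wa[OF v] by (simp only: Xc[OF v])
    qed
    also have "\<dots> = lam (\<Sum>v\<in>tor_V n. W v * X v)" by (rule lam_sum[symmetric])
    also have "(\<Sum>v\<in>tor_V n. W v * X v) = (\<Sum>v\<in>tor_V n. \<Sum>p\<in>?I. a p * (HX (?g p) v * X v))"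
    proof (rule sum.cong[OF refl])
      fix v assume v: "v \<in> tor_V n"
      show "W v * X v = (\<Sum>p\<in>?I. a p * (HX (?g p) v * X v))"
        using a v by (simp add: sum_distrib_right mult.assoc)
    qed
    also have "\<dots> = (\<Sum>p\<in>?I. \<Sum>v\<in>tor_V n. a p * (HX (?g p) v * X v))" by (rule sum.swap)
    also have "\<dots> = (\<Sum>p\<in>?I. a p * (\<Sum>v\<in>tor_V n. HX (?g p) v * X v))" by (simp only: sum_distrib_left)
    also have "\<dots> = (\<Sum>p\<in>?I. a p * 0)"
    proof (rule sum.cong[OF refl])
      fix p assume "p \<in> ?I"
      then have "?g p \<in> tor_CX n" using memb2(2)[OF ij(3,4)] by auto
      then show "a p * (\<Sum>v\<in>tor_V n. HX (?g p) v * X v) = a p * 0" using flX by simp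
    qed
    also have "\<dots> = 0" by simp
    finally show "(\<Sum>p\<in>bsupp n m. x p * z p) = 0" by (simp add: lam_zero)
  qed
qed

end



theorem theorem2:
  fixes n m :: nat
    and HX HZ :: "nat \<times> nat \<Rightarrow> nat \<times> nat \<Rightarrow> 'a::{field, finite}"
    and b :: "nat \<Rightarrow> 'a"
  assumes "n \<ge> 2" and "m \<ge> 1" and "card (UNIV :: 'a set) = 2 ^ m"
    and "labeling n (tor_CX n) HX" and "labeling n (tor_CZ n) HZ"
    and "\<forall>k vs cs. is_cycle n (tor_CX n) k vs cs \<longrightarrow> cycle_prod HX k vs cs = 1"
    and "qdual n (qcode n (tor_CZ n) HZ) \<subseteq> qcode n (tor_CX n) HX"
    and "F2_basis m b"
  shows "(\<forall>x \<in> bcodeX n m b HX - bdual n m (bcodeZ n m b HZ). hweight n m x \<ge> n) \<and>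
         (\<forall>x \<in> bcodeZ n m b HZ - bdual n m (bcodeX n m b HX). hweight n m x \<ge> n)"
proof -
  have c2: "(1::'a) + 1 = 0" by (rule char2[OF assms(3)])
  have orth: "\<forall>p\<in>tor_CX n. \<forall>q\<in>tor_CZ n. (\<Sum>v\<in>tor_V n. HX p v * HZ q v) = 0"
  proof (intro ballI)
    fix p q assume p: "p \<in> tor_CX n" and q: "q \<in> tor_CZ n"
    define r where "r v = (if v \<in> tor_V n then HZ q v else 0)" for v
    have "r \<in> qdual n (qcode n (tor_CZ n) HZ)" unfolding qdual_def
    proof (intro CollectI conjI allI impI ballI)
      fix v assume "v \<notin> tor_V n" then show "r v = 0" unfolding r_def by simp
    next
      fix Z assume Z: "Z \<in> qcode n (tor_CZ n) HZ"
      have "(\<Sum>v\<in>tor_V n. Z v * r v) = (\<Sum>v\<in>tor_V n. HZ q v * Z v)"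
        by (rule sum.cong[OF refl]) (simp add: r_def mult.commute)
      also have "\<dots> = 0" using Z q unfolding qcode_def by blast
      finally show "(\<Sum>v\<in>tor_V n. Z v * r v) = 0" .
    qed
    then have "r \<in> qcode n (tor_CX n) HX" using assms(7) by blast
    then have "(\<Sum>v\<in>tor_V n. HX p v * r v) = 0" using p unfolding qcode_def by blast
    moreover have "(\<Sum>v\<in>tor_V n. HX p v * r v) = (\<Sum>v\<in>tor_V n. HX p v * HZ q v)"
      by (rule sum.cong[OF refl]) (simp add: r_def)
    ultimately show "(\<Sum>v\<in>tor_V n. HX p v * HZ q v) = 0" by simp
  qed
  have orth': "\<forall>p\<in>tor_CZ n. \<forall>q\<in>tor_CX n. (\<Sum>v\<in>tor_V n. HZ p v * HX q v) = 0"
    using orth by (simp add: mult.commute)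
  show ?thesis
  proof (intro conjI ballI)
    fix x assume x: "x \<in> bcodeX n m b HX - bdual n m (bcodeZ n m b HZ)"
    show "n \<le> hweight n m x"
    proof (rule ccontr)
      assume "\<not> n \<le> hweight n m x"
      then have hw: "hweight n m x < n" by simp
      have "x \<in> bcodeX n m b HX" using x by simp
      then have "x \<in> bdual n m (bcodeZ n m b HZ)"
        using part1[OF assms(8) c2 assms(1) assms(4) assms(5) orth _ hw] by blast
      then show False using x by simp
    qed
  next
    fix x assume x: "x \<in> bcodeZ n m b HZ - bdual n m (bcodeX n m b HX)"
    show "n \<le> hweight n m x"
    proof (rule ccontr)
      assume "\<not> n \<le> hweight n m x"
      then have hw: "hweight n m x < n" by simp
      have "x \<in> bcodeZ n m b HZ" using x by simp
      then have "x \<in> bdual n m (bcodeX n m b HX)"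
        using part2[OF assms(8) c2 assms(1) assms(2) assms(4) assms(5) orth' _ hw] by blast
      then show False using x by simp
    qed
  qed
qed


end
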